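(* Let $X,Y\in\mathcal L^2$ have different distributions and suppose $|\mathrm{Supp}(Y)|>2$. Then $(X,Y)\in\mathrm{IC}$ if and only if $(X,Y)\in\mathrm{IC}_0$.
   Context: All random variables live on an atomless probability space. $\mathcal L^2$ denotes the set of non-degenerate real random variables with finite variance. A function $g:\mathbb R\to\mathbb R$ is admissible for $(X,Y)$ if it is measurable and $g(X),g(Y)\in\mathcal L^2$. For $r\in[-1,1]$, $(X,Y)\in\mathrm{IC}_r$ means $X,Y\in\mathcal L^2$ and $\mathrm{Corr}(X,Y)=\mathrm{Corr}(g(X),g(Y))=r$ for all admissible $g$; $\mathrm{IC}=\bigcup_{r\in[-1,1]}\mathrm{IC}_r$. The support of a random variable $X$ is $\mathrm{Supp}(X)=\{x\in\mathbb R:\mathbb P(x-\epsilon<X\le x+\epsilon)>0\text{ for all }\epsilon>0\}$, and $|\cdot|$ denotes cardinality. *)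

theory Defs
  imports "HOL-Probability.Probability"
begin

definition atomless :: "'a measure \<Rightarrow> bool" where
  "atomless M \<longleftrightarrow> (\<forall>A\<in>sets M. measure M A > 0 \<longrightarrow>
      (\<exists>B\<in>sets M. B \<subseteq> A \<and> 0 < measure M B \<and> measure M B < measure M A))"

definition cov :: "'a measure \<Rightarrow> ('a \<Rightarrow> real) \<Rightarrow> ('a \<Rightarrow> real) \<Rightarrow> real" where
  "cov M X Y = (\<integral>\<omega>. (X \<omega> - (\<integral>x. X x \<partial>M)) * (Y \<omega> - (\<integral>x. Y x \<partial>M)) \<partial>M)"

definition var :: "'a measure \<Rightarrow> ('a \<Rightarrow> real) \<Rightarrow> real" where
  "var M X = cov M X X"

definition corr :: "'a measure \<Rightarrow> ('a \<Rightarrow> real) \<Rightarrow> ('a \<Rightarrow> real) \<Rightarrow> real" where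
  "corr M X Y = cov M X Y / (sqrt (var M X) * sqrt (var M Y))"

definition L2 :: "'a measure \<Rightarrow> ('a \<Rightarrow> real) \<Rightarrow> bool" where
  "L2 M X \<longleftrightarrow> X \<in> borel_measurable M \<and> integrable M (\<lambda>\<omega>. (X \<omega>)\<^sup>2) \<and>
     \<not> (\<exists>c. AE \<omega> in M. X \<omega> = c)"

definition admissible :: "'a measure \<Rightarrow> (real \<Rightarrow> real) \<Rightarrow> ('a \<Rightarrow> real) \<Rightarrow> ('a \<Rightarrow> real) \<Rightarrow> bool" where
  "admissible M g X Y \<longleftrightarrow> g \<in> borel_measurable borel \<and> L2 M (g \<circ> X) \<and> L2 M (g \<circ> Y)"

definition IC_r :: "'a measure \<Rightarrow> real \<Rightarrow> ('a \<Rightarrow> real) \<Rightarrow> ('a \<Rightarrow> real) \<Rightarrow> bool" where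
  "IC_r M r X Y \<longleftrightarrow> L2 M X \<and> L2 M Y \<and> corr M X Y = r \<and>
     (\<forall>g. admissible M g X Y \<longrightarrow> corr M (g \<circ> X) (g \<circ> Y) = r)"

definition IC :: "'a measure \<Rightarrow> ('a \<Rightarrow> real) \<Rightarrow> ('a \<Rightarrow> real) \<Rightarrow> bool" where
  "IC M X Y \<longleftrightarrow> (\<exists>r\<in>{-1..1}. IC_r M r X Y)"

definition supp :: "'a measure \<Rightarrow> ('a \<Rightarrow> real) \<Rightarrow> real set" where
  "supp M X = {x. \<forall>\<epsilon>>0. measure M {\<omega>\<in>space M. x - \<epsilon> < X \<omega> \<and> X \<omega> \<le> x + \<epsilon>} > 0}"

end

theory Submission
  imports Defs
begin

lemma monic_prop:
  fixes a0 a1 b0 b1 g0 g1 :: real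
  assumes h1: "2*g1 = a1+b1" and h2: "g1^2 + 2*g0 = a0+b0+a1*b1"
    and h3: "2*g0*g1 = a1*b0+a0*b1" and h4: "g0^2 = a0*b0"
    and da: "a1^2 \<le> 4*a0" and db: "b1^2 < 4*b0"
  shows "a0 = b0 \<and> a1 = b1"
proof -
  define d where "d = (a1 - b1)/2"
  have a1e: "a1 = g1 + d" using h1 unfolding d_def by (simp add: field_simps)
  have b1e: "b1 = g1 - d" using h1 unfolding d_def by (simp add: field_simps)
  have g0e: "2*g0 = a0+b0-d^2" using h2 unfolding a1e b1e by (simp add: algebra_simps power2_eq_square)
  have k3: "d * (d*g1 + b0 - a0) = 0"
  proof -
    have "4*g0*g1 = 2*(a1*b0+a0*b1)" using h3 by simp
    also have "4*g0*g1 = (a0+b0-d^2)*2*g1" using g0e by (metis mult.assoc mult.left_commute mult_2 numeral_Bit0)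
    finally show ?thesis unfolding a1e b1e by (simp add: algebra_simps power2_eq_square)
  qed
  have k4: "(a0+b0-d^2)^2 = 4*a0*b0"
  proof -
    have "(2*g0)^2 = 4*a0*b0" using h4 by (simp add: power_mult_distrib)
    then show ?thesis using g0e by simp
  qed
  show ?thesis
  proof (cases "d = 0")
    case True
    then have "(a0-b0)^2 = 0" using k4 by (simp add: algebra_simps power2_eq_square)
    then show ?thesis using True a1e b1e by simp
  next
    case False
    then have e: "a0 - b0 = d*g1" using k3 by simp
    have "(a0-b0)^2 - 2*d^2*(a0+b0) + d^2*d^2 = 0" using k4 by (simp add: algebra_simps power2_eq_square)
    then have "d^2 * (g1^2 - 2*(a0+b0) + d^2) = 0" unfolding e by (simp add: algebra_simps power2_eq_square)
    then have "g1^2 + d^2 = 2*(a0+b0)" using False by simp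
    moreover have "a1^2 + b1^2 = 2*g1^2 + 2*d^2" unfolding a1e b1e by (simp add: algebra_simps power2_eq_square)
    ultimately have False using da db by (smt (verit))
    then show ?thesis by simp
  qed
qed

lemma coeff_prop:
  fixes a0 a1 a2 b0 b1 b2 c0 c1 c2 R :: real
  assumes id: "\<And>t. t \<noteq> 0 \<Longrightarrow> t \<noteq> 1 \<Longrightarrow>
      (c0 + c1*t + c2*t^2)^2 = R * ((a0 + a1*t + a2*t^2) * (b0 + b1*t + b2*t^2))"
    and R: "R > 0" and a2: "a2 > 0" and b2: "b2 > 0"
    and da: "a1^2 \<le> 4*a0*a2" and db: "b1^2 < 4*b0*b2"
  shows "a0*b2 = b0*a2 \<and> a1*b2 = b1*a2"
proof -
  define E0 where "E0 = c0^2 - R*a0*b0"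
  define E1 where "E1 = 2*c0*c1 - R*(a0*b1+a1*b0)"
  define E2 where "E2 = c1^2 + 2*c0*c2 - R*(a0*b2+a1*b1+a2*b0)"
  define E3 where "E3 = 2*c1*c2 - R*(a1*b2+a2*b1)"
  define E4 where "E4 = c2^2 - R*a2*b2"
  have F: "(c0 + c1*t + c2*t^2)^2 - R * ((a0 + a1*t + a2*t^2) * (b0 + b1*t + b2*t^2))
      = E0 + E1*t + E2*t^2 + E3*t^3 + E4*t^4" for t
    unfolding E0_def E1_def E2_def E3_def E4_def by (simp add: algebra_simps power2_eq_square power3_eq_cube power4_eq_xxxx)
  have z: "E0 + E1*t + E2*t^2 + E3*t^3 + E4*t^4 = 0" if "t \<noteq> 0" "t \<noteq> 1" for t
    using id[OF that] F[of t] by simp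
  have z2: "E0 + 2*E1 + 4*E2 + 8*E3 + 16*E4 = 0" using z[of 2] by simp
  have z3: "E0 + 3*E1 + 9*E2 + 27*E3 + 81*E4 = 0" using z[of 3] by simp
  have z4: "E0 + 4*E1 + 16*E2 + 64*E3 + 256*E4 = 0" using z[of 4] by simp
  have z5: "E0 - E1 + E2 - E3 + E4 = 0" using z[of "-1"] by simp
  have z6: "E0 - 2*E1 + 4*E2 - 8*E3 + 16*E4 = 0" using z[of "-2"] by simp
  have "E0 = 0" "E1 = 0" "E2 = 0" "E3 = 0" "E4 = 0" using z2 z3 z4 z5 z6 by linarith+
  then have e0: "c0^2 = R*a0*b0" and e1: "2*c0*c1 = R*(a0*b1+a1*b0)"
    and e2: "c1^2 + 2*c0*c2 = R*(a0*b2+a1*b1+a2*b0)" and e3: "2*c1*c2 = R*(a1*b2+a2*b1)"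
    and e4: "c2^2 = R*a2*b2"
    unfolding E0_def E1_def E2_def E3_def E4_def by simp_all
  have "c2^2 > 0" using e4 R a2 b2 by simp
  then have c2: "c2 \<noteq> 0" by auto
  have m1: "2*(c1/c2) = a1/a2 + b1/b2"
  proof -
    have "2*(c1/c2) = 2*c1*c2/c2^2" using c2 by (simp add: power2_eq_square)
    also have "\<dots> = R*(a1*b2+a2*b1)/(R*a2*b2)" using e3 e4 by simp
    also have "\<dots> = a1/a2 + b1/b2" using R a2 b2 by (simp add: field_simps)
    finally show ?thesis .
  qed
  have m2: "(c1/c2)^2 + 2*(c0/c2) = a0/a2 + b0/b2 + (a1/a2)*(b1/b2)"
  proof -
    have "(c1/c2)^2 + 2*(c0/c2) = (c1^2 + 2*c0*c2)/c2^2" using c2 by (simp add: field_simps power2_eq_square)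
    also have "\<dots> = R*(a0*b2+a1*b1+a2*b0)/(R*a2*b2)" using e2 e4 by simp
    also have "\<dots> = a0/a2 + b0/b2 + (a1/a2)*(b1/b2)" using R a2 b2 by (simp add: field_simps)
    finally show ?thesis .
  qed
  have m3: "2*(c0/c2)*(c1/c2) = (a1/a2)*(b0/b2) + (a0/a2)*(b1/b2)"
  proof -
    have "2*(c0/c2)*(c1/c2) = (2*c0*c1)/c2^2" using c2 by (simp add: field_simps power2_eq_square)
    also have "\<dots> = R*(a0*b1+a1*b0)/(R*a2*b2)" using e1 e4 by simp
    also have "\<dots> = (a1/a2)*(b0/b2) + (a0/a2)*(b1/b2)" using R a2 b2 by (simp add: field_simps)
    finally show ?thesis .
  qed
  have m4: "(c0/c2)^2 = (a0/a2)*(b0/b2)"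
  proof -
    have "(c0/c2)^2 = c0^2/c2^2" by (simp add: power_divide)
    also have "\<dots> = R*a0*b0/(R*a2*b2)" using e0 e4 by simp
    also have "\<dots> = (a0/a2)*(b0/b2)" using R a2 b2 by (simp add: field_simps)
    finally show ?thesis .
  qed
  have da': "(a1/a2)^2 \<le> 4*(a0/a2)"
  proof -
    have "(a1/a2)^2 = a1^2/a2^2" by (simp add: power_divide)
    also have "\<dots> \<le> 4*a0*a2/a2^2" using da a2 by (simp add: divide_right_mono)
    also have "\<dots> = 4*(a0/a2)" using a2 by (simp add: power2_eq_square)
    finally show ?thesis .
  qed
  have db': "(b1/b2)^2 < 4*(b0/b2)"
  proof -
    have "(b1/b2)^2 = b1^2/b2^2" by (simp add: power_divide)
    also have "\<dots> < 4*b0*b2/b2^2" using db b2 by (simp add: divide_strict_right_mono)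
    also have "\<dots> = 4*(b0/b2)" using b2 by (simp add: power2_eq_square)
    finally show ?thesis .
  qed
  have "a0/a2 = b0/b2 \<and> a1/a2 = b1/b2"
    by (rule monic_prop[OF m1 m2 m3 m4 da' db'])
  then show ?thesis using a2 b2 by (simp add: field_simps)
qed

lemma prob_eq:
  fixes p2 p3 q2 q3 :: real
  assumes "q2 > 0" "q3 > 0" "q2 + q3 < 1" "p3 > 0" "p3 < 1" "p2 \<ge> 0"
    and h1: "(p2 - p2^2)*(q3 - q3^2) = (q2 - q2^2)*(p3 - p3^2)"
    and h2: "(-2*p2*p3)*(q3 - q3^2) = (-2*q2*q3)*(p3 - p3^2)"
  shows "p2 = q2 \<and> p3 = q3"
proof -
  have "(p3*q3)*(p2*(1-q3)) = (p3*q3)*(q2*(1-p3))" using h2 by (simp add: power2_eq_square algebra_simps)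
  then have s: "p2*(1-q3) = q2*(1-p3)" using assms(2,4) by simp
  define k where "k = (1-p3)/(1-q3)"
  have k: "1 - p3 = k*(1-q3)" using assms by (simp add: k_def)
  have p2: "p2 = q2*k" using s assms by (simp add: k_def field_simps)
  have "q2*k*(1-q2*k)*(q3*(1-q3)) = q2*(1-q2)*(p3*(k*(1-q3)))"
    using h1 unfolding p2 k[symmetric] by (simp add: power2_eq_square algebra_simps)
  then have "(1-q2*k)*q3 = (1-q2)*p3" using assms k
    by (smt (verit) mult.assoc mult.commute mult_cancel_left mult_pos_pos zero_less_mult_iff)
  moreover have p3e: "p3 = 1 + k*q3 - k" using k by (simp add: algebra_simps)
  moreover have "(k-1)*(q2+q3-1) = (1-q2)*(1+k*q3-k) - (1-q2*k)*q3" by (simp add: algebra_simps)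
  ultimately have "(k-1)*(q2+q3-1) = 0" by simp
  then have "k = 1" using assms by simp
  then show ?thesis using p2 k by simp
qed

lemma int_ind:
  fixes X :: "'a \<Rightarrow> real"
  assumes "prob_space M" "X \<in> borel_measurable M" "S \<in> sets borel"
  shows "(\<integral>\<omega>. indicator S (X \<omega>) \<partial>M) = measure (distr M borel X) S"
  using integral_distr[where g=X and M=M and N=borel and f="indicator S :: real \<Rightarrow> real"] assms by simp

lemma bdd_integrable:
  fixes f :: "'a \<Rightarrow> real"
  assumes "prob_space M" "f \<in> borel_measurable M" "\<And>\<omega>. \<bar>f \<omega>\<bar> \<le> K"
  shows "integrable M f"
proof -
  interpret prob_space M by fact
  show ?thesis by (rule integrable_const_bound[where B=K]) (use assms in auto)
qed

lemma cov_expand: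
  assumes "prob_space M" "integrable M f" "integrable M h" "integrable M (\<lambda>\<omega>. f \<omega> * h \<omega>)"
  shows "cov M f h = (\<integral>\<omega>. f \<omega> * h \<omega> \<partial>M) - (\<integral>\<omega>. f \<omega> \<partial>M) * (\<integral>\<omega>. h \<omega> \<partial>M)"
proof -
  interpret prob_space M by fact
  define a where "a = (\<integral>\<omega>. f \<omega> \<partial>M)"
  define b where "b = (\<integral>\<omega>. h \<omega> \<partial>M)"
  have e: "(\<lambda>\<omega>. (f \<omega> - a) * (h \<omega> - b)) = (\<lambda>\<omega>. (f \<omega> * h \<omega> - (b * f \<omega> + a * h \<omega>)) + a*b)"
    by (auto simp: algebra_simps)
  have "cov M f h = (\<integral>\<omega>. (f \<omega> * h \<omega> - (b * f \<omega> + a * h \<omega>)) + a*b \<partial>M)"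
    unfolding cov_def a_def[symmetric] b_def[symmetric] e ..
  also have "\<dots> = (\<integral>\<omega>. f \<omega> * h \<omega> \<partial>M) - (b*a + a*b) + a*b"
    using assms by (simp add: a_def b_def prob_space)
  finally show ?thesis by (simp add: a_def b_def)
qed

lemma ae_pos_ex:
  fixes X :: "'a \<Rightarrow> real"
  assumes "AE \<omega> in M. P \<omega>" "X \<in> borel_measurable M" "S \<in> sets borel"
    and "measure (distr M borel X) S > 0"
  shows "\<exists>\<omega>\<in>space M. X \<omega> \<in> S \<and> P \<omega>"
proof (rule ccontr)
  assume nx: "\<not> ?thesis"
  from assms(1) obtain N where N: "{x \<in> space M. \<not> P x} \<subseteq> N" "emeasure M N = 0" "N \<in> sets M"
    by (rule AE_E)
  have sub: "X -` S \<inter> space M \<subseteq> N" using nx N(1) by auto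
  have "emeasure M (X -` S \<inter> space M) \<le> emeasure M N"
    by (rule emeasure_mono[OF sub N(3)])
  then have "emeasure M (X -` S \<inter> space M) = 0" using N(2) by simp
  then have "measure M (X -` S \<inter> space M) = 0" by (simp add: measure_def)
  then show False using assms(4) by (simp add: measure_distr assms(2,3))
qed

lemma distr_compl:
  fixes X :: "'a \<Rightarrow> real"
  assumes "prob_space M" "X \<in> borel_measurable M" "B \<in> sets borel" "C \<in> sets borel" "B \<inter> C = {}"
  shows "measure (distr M borel X) (-(B \<union> C)) = 1 - measure (distr M borel X) B - measure (distr M borel X) C"
proof -
  interpret P: prob_space "distr M borel X" using assms by (simp add: prob_space.prob_space_distr)
  have "measure (distr M borel X) (space (distr M borel X) - (B \<union> C)) = 1 - measure (distr M borel X) (B \<union> C)"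
    using assms by (intro P.prob_compl) auto
  moreover have "measure (distr M borel X) (B \<union> C) = measure (distr M borel X) B + measure (distr M borel X) C"
    using assms by (intro P.finite_measure_Union) auto
  ultimately show ?thesis by (simp add: Compl_eq_Diff_UNIV)
qed

lemma int_ind1:
  fixes X :: "'a \<Rightarrow> real"
  assumes "prob_space M" "X \<in> borel_measurable M" "S \<in> sets borel"
  shows "integrable M (\<lambda>\<omega>. indicator S (X \<omega>) :: real)"
  by (rule bdd_integrable[where K=1]) (use assms in \<open>auto simp: indicator_def\<close>)

lemma int_ind2:
  fixes X Y :: "'a \<Rightarrow> real"
  assumes "prob_space M" "X \<in> borel_measurable M" "Y \<in> borel_measurable M" "S \<in> sets borel" "T \<in> sets borel"
  shows "integrable M (\<lambda>\<omega>. indicator S (X \<omega>) * indicator T (Y \<omega>) :: real)"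
  by (rule bdd_integrable[where K=1]) (use assms in \<open>auto simp: indicator_def\<close>)

lemma var_nonneg: "var M f \<ge> 0"
  unfolding var_def cov_def by (rule integral_nonneg_AE) auto

lemma corr_sq:
  assumes "corr M f h = r" "r \<noteq> 0"
  shows "(cov M f h)^2 = r^2 * (var M f * var M h)"
proof -
  have d: "sqrt (var M f) * sqrt (var M h) \<noteq> 0"
    using assms unfolding corr_def by auto
  then have "cov M f h = r * (sqrt (var M f) * sqrt (var M h))"
    using assms(1) unfolding corr_def by (simp add: field_simps)
  then have "(cov M f h)^2 = r^2 * ((sqrt (var M f))^2 * (sqrt (var M h))^2)"
    by (simp add: power_mult_distrib)
  then show ?thesis using var_nonneg[of M f] var_nonneg[of M h] by simp
qed

lemma cov_g:
  fixes X Y :: "'a \<Rightarrow> real"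
  assumes M: "prob_space M" and X[measurable]: "X \<in> borel_measurable M" and Y[measurable]: "Y \<in> borel_measurable M"
    and B[measurable]: "B \<in> sets borel" and C[measurable]: "C \<in> sets borel"
  shows "cov M ((\<lambda>x. indicator B x + t * indicator C x) \<circ> X) ((\<lambda>x. indicator B x + t * indicator C x) \<circ> Y)
    = ((\<integral>\<omega>. indicator B (X \<omega>) * indicator B (Y \<omega>) \<partial>M)
       + t * ((\<integral>\<omega>. indicator B (X \<omega>) * indicator C (Y \<omega>) \<partial>M) + (\<integral>\<omega>. indicator C (X \<omega>) * indicator B (Y \<omega>) \<partial>M))
       + t^2 * (\<integral>\<omega>. indicator C (X \<omega>) * indicator C (Y \<omega>) \<partial>M))
      - (measure (distr M borel X) B + t * measure (distr M borel X) C)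
        * (measure (distr M borel Y) B + t * measure (distr M borel Y) C)"
proof -
  let ?f = "(\<lambda>x. indicator B x + t * indicator C x :: real) \<circ> X"
  let ?h = "(\<lambda>x. indicator B x + t * indicator C x :: real) \<circ> Y"
  note i1 = int_ind1[OF M] and i2 = int_ind2[OF M]
  have f: "?f = (\<lambda>\<omega>. indicator B (X \<omega>) + t * indicator C (X \<omega>))" by auto
  have h: "?h = (\<lambda>\<omega>. indicator B (Y \<omega>) + t * indicator C (Y \<omega>))" by auto
  have fh: "(\<lambda>\<omega>. ?f \<omega> * ?h \<omega>) = (\<lambda>\<omega>. (indicator B (X \<omega>) * indicator B (Y \<omega>)
       + t * (indicator B (X \<omega>) * indicator C (Y \<omega>) + indicator C (X \<omega>) * indicator B (Y \<omega>)))
       + t^2 * (indicator C (X \<omega>) * indicator C (Y \<omega>)))"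
    by (auto simp: algebra_simps power2_eq_square)
  have intf: "integrable M ?f" unfolding f using i1 X Y B C by auto
  have inth: "integrable M ?h" unfolding h using i1 X Y B C by auto
  have intfh: "integrable M (\<lambda>\<omega>. ?f \<omega> * ?h \<omega>)" unfolding fh using i2 X Y B C by auto
  have Ef: "(\<integral>\<omega>. ?f \<omega> \<partial>M) = measure (distr M borel X) B + t * measure (distr M borel X) C"
    unfolding f using i1 X B C int_ind[OF M X B] int_ind[OF M X C] by simp
  have Eh: "(\<integral>\<omega>. ?h \<omega> \<partial>M) = measure (distr M borel Y) B + t * measure (distr M borel Y) C"
    unfolding h using i1 Y B C int_ind[OF M Y B] int_ind[OF M Y C] by simp
  have Efh: "(\<integral>\<omega>. ?f \<omega> * ?h \<omega> \<partial>M) = ((\<integral>\<omega>. indicator B (X \<omega>) * indicator B (Y \<omega>) \<partial>M)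
       + t * ((\<integral>\<omega>. indicator B (X \<omega>) * indicator C (Y \<omega>) \<partial>M) + (\<integral>\<omega>. indicator C (X \<omega>) * indicator B (Y \<omega>) \<partial>M))
       + t^2 * (\<integral>\<omega>. indicator C (X \<omega>) * indicator C (Y \<omega>) \<partial>M))"
    unfolding fh using i2 X Y B C by simp
  show ?thesis
    using cov_expand[OF M intf inth intfh] Ef Eh Efh by (simp add: comp_def)
qed

lemma L2_g:
  fixes X :: "'a \<Rightarrow> real"
  assumes M: "prob_space M" and X[measurable]: "X \<in> borel_measurable M"
    and B[measurable]: "B \<in> sets borel" and C[measurable]: "C \<in> sets borel" and BC: "B \<inter> C = {}"
    and t: "t \<noteq> 0" "t \<noteq> 1"
    and two: "(measure (distr M borel X) B > 0 \<and> measure (distr M borel X) C > 0)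
      \<or> (measure (distr M borel X) B > 0 \<and> measure (distr M borel X) (-(B \<union> C)) > 0)
      \<or> (measure (distr M borel X) C > 0 \<and> measure (distr M borel X) (-(B \<union> C)) > 0)"
  shows "L2 M ((\<lambda>x. indicator B x + t * indicator C x) \<circ> X)"
proof -
  define g where "g = (\<lambda>x. indicator B x + t * indicator C x :: real)"
  have gB: "g x = 1" if "x \<in> B" for x using that BC by (auto simp: g_def indicator_def)
  have gC: "g x = t" if "x \<in> C" for x using that BC by (auto simp: g_def indicator_def)
  have gA: "g x = 0" if "x \<in> -(B \<union> C)" for x using that by (auto simp: g_def indicator_def)
  have gm[measurable]: "g \<in> borel_measurable borel" unfolding g_def by measurable
  have tb: "t^2 \<le> (1+\<bar>t\<bar>)^2" using power_mono[of "\<bar>t\<bar>" "1+\<bar>t\<bar>" 2] by simp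
  have ob: "1 \<le> (1+\<bar>t\<bar>)^2" using power_mono[of 1 "1+\<bar>t\<bar>" 2] by simp
  have bnd: "\<bar>(g x)^2\<bar> \<le> (1+\<bar>t\<bar>)^2" for x
  proof -
    consider "x \<in> B" | "x \<in> C" | "x \<in> -(B \<union> C)" by blast
    then show ?thesis using gB gC gA tb ob by cases auto
  qed
  have meas: "g \<circ> X \<in> borel_measurable M" by measurable
  have sq: "integrable M (\<lambda>\<omega>. ((g \<circ> X) \<omega>)^2)"
  proof (rule bdd_integrable[OF M])
    show "(\<lambda>\<omega>. ((g \<circ> X) \<omega>)^2) \<in> borel_measurable M" using meas by measurable
    show "\<bar>((g \<circ> X) \<omega>)^2\<bar> \<le> (1+\<bar>t\<bar>)^2" for \<omega> using bnd[of "X \<omega>"] by simp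
  qed
  have nd: "\<not> (\<exists>c. AE \<omega> in M. (g \<circ> X) \<omega> = c)"
  proof
    assume "\<exists>c. AE \<omega> in M. (g \<circ> X) \<omega> = c"
    then obtain c where ae: "AE \<omega> in M. g (X \<omega>) = c" by auto
    have vB: "c = 1" if "measure (distr M borel X) B > 0"
      using ae_pos_ex[OF ae X B that] gB by auto
    have vC: "c = t" if "measure (distr M borel X) C > 0"
      using ae_pos_ex[OF ae X C that] gC by auto
    have vA: "c = 0" if "measure (distr M borel X) (-(B \<union> C)) > 0"
      using ae_pos_ex[OF ae X _ that] gA by auto
    show False using two vA vB vC t by auto
  qed
  show ?thesis unfolding L2_def g_def[symmetric] using meas sq nd by blast
qed

lemma L0:
  fixes X Y :: "'a \<Rightarrow> real"
  assumes M: "prob_space M" and X[measurable]: "X \<in> borel_measurable M" and Y[measurable]: "Y \<in> borel_measurable M"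
    and IC: "\<And>g. admissible M g X Y \<Longrightarrow> corr M (g \<circ> X) (g \<circ> Y) = r" and r: "r \<noteq> 0"
    and B[measurable]: "B \<in> sets borel" and C[measurable]: "C \<in> sets borel" and BC: "B \<inter> C = {}"
    and q2: "measure (distr M borel Y) B > 0" and q3: "measure (distr M borel Y) C > 0"
    and q1: "measure (distr M borel Y) (-(B \<union> C)) > 0"
    and p3: "measure (distr M borel X) C > 0"
    and p2: "measure (distr M borel X) B > 0 \<or> measure (distr M borel X) (-(B \<union> C)) > 0"
  shows "measure (distr M borel X) B = measure (distr M borel Y) B \<and>
         measure (distr M borel X) C = measure (distr M borel Y) C"
proof -
  define P2 where "P2 = measure (distr M borel X) B"
  define P3 where "P3 = measure (distr M borel X) C"
  define Q2 where "Q2 = measure (distr M borel Y) B"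
  define Q3 where "Q3 = measure (distr M borel Y) C"
  have P1: "measure (distr M borel X) (-(B \<union> C)) = 1 - P2 - P3"
    unfolding P2_def P3_def by (rule distr_compl[OF M X B C BC])
  have Q1: "measure (distr M borel Y) (-(B \<union> C)) = 1 - Q2 - Q3"
    unfolding Q2_def Q3_def by (rule distr_compl[OF M Y B C BC])
  have P1n: "1 - P2 - P3 \<ge> 0" using P1 measure_nonneg by metis
  have P2n: "P2 \<ge> 0" unfolding P2_def by simp
  define m22 :: real where "m22 = (\<integral>\<omega>. indicator B (X \<omega>) * indicator B (Y \<omega>) \<partial>M)"
  define m23 :: real where "m23 = (\<integral>\<omega>. indicator B (X \<omega>) * indicator C (Y \<omega>) \<partial>M)"
  define m32 :: real where "m32 = (\<integral>\<omega>. indicator C (X \<omega>) * indicator B (Y \<omega>) \<partial>M)"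
  define m33 :: real where "m33 = (\<integral>\<omega>. indicator C (X \<omega>) * indicator C (Y \<omega>) \<partial>M)"
  define c0 where "c0 = m22 - P2*Q2"
  define c1 where "c1 = m23 + m32 - P2*Q3 - P3*Q2"
  define c2 where "c2 = m33 - P3*Q3"
  define a0 where "a0 = P2 - P2^2"
  define a1 where "a1 = -2*P2*P3"
  define a2 where "a2 = P3 - P3^2"
  define b0 where "b0 = Q2 - Q2^2"
  define b1 where "b1 = -2*Q2*Q3"
  define b2 where "b2 = Q3 - Q3^2"
  have varg: "var M ((\<lambda>x. indicator B x + t * indicator C x) \<circ> Z) =
      (measure (distr M borel Z) B - (measure (distr M borel Z) B)^2)
      + (-2 * measure (distr M borel Z) B * measure (distr M borel Z) C) * t
      + (measure (distr M borel Z) C - (measure (distr M borel Z) C)^2) * t^2"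
    if Z[measurable]: "Z \<in> borel_measurable M" for Z :: "'a \<Rightarrow> real" and t
  proof -
    have e1: "(\<lambda>\<omega>. indicator S (Z \<omega>) * indicator S (Z \<omega>) :: real) = (\<lambda>\<omega>. indicator S (Z \<omega>))" for S
      by (auto simp: indicator_def)
    have e2: "(\<lambda>\<omega>. indicator B (Z \<omega>) * indicator C (Z \<omega>) :: real) = (\<lambda>\<omega>. 0)"
      using BC by (force simp: indicator_def fun_eq_iff)
    have e3: "(\<lambda>\<omega>. indicator C (Z \<omega>) * indicator B (Z \<omega>) :: real) = (\<lambda>\<omega>. 0)"
      using BC by (force simp: indicator_def fun_eq_iff)
    show ?thesis unfolding var_def cov_g[OF M Z Z B C] e1 e2 e3
      by (simp add: int_ind[OF M Z B] int_ind[OF M Z C] algebra_simps power2_eq_square)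
  qed
  have key: "(c0 + c1*t + c2*t^2)^2 = r^2 * ((a0 + a1*t + a2*t^2) * (b0 + b1*t + b2*t^2))"
    if t: "t \<noteq> 0" "t \<noteq> 1" for t
  proof -
    define g where "g = (\<lambda>x. indicator B x + t * indicator C x :: real)"
    have adm: "admissible M g X Y"
      unfolding admissible_def
    proof (intro conjI)
      show "g \<in> borel_measurable borel" unfolding g_def by measurable
      show "L2 M (g \<circ> X)" unfolding g_def
        by (rule L2_g[OF M X B C BC t]) (use p2 p3 in auto)
      show "L2 M (g \<circ> Y)" unfolding g_def
        by (rule L2_g[OF M Y B C BC t]) (use q2 q3 in auto)
    qed
    have "(cov M (g \<circ> X) (g \<circ> Y))^2 = r^2 * (var M (g \<circ> X) * var M (g \<circ> Y))"
      by (rule corr_sq[OF IC[OF adm] r])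
    moreover have "cov M (g \<circ> X) (g \<circ> Y) = c0 + c1*t + c2*t^2"
      unfolding g_def cov_g[OF M X Y B C] c0_def c1_def c2_def m22_def m23_def m32_def m33_def P2_def P3_def Q2_def Q3_def
      by (simp add: algebra_simps power2_eq_square)
    moreover have "var M (g \<circ> X) = a0 + a1*t + a2*t^2"
      unfolding g_def varg[OF X] a0_def a1_def a2_def P2_def P3_def by (simp add: algebra_simps)
    moreover have "var M (g \<circ> Y) = b0 + b1*t + b2*t^2"
      unfolding g_def varg[OF Y] b0_def b1_def b2_def Q2_def Q3_def by (simp add: algebra_simps)
    ultimately show ?thesis by simp
  qed
  have P3lt: "P3 < 1" using p2 P1 P2n P1n unfolding P2_def[symmetric] by linarith
  have P3p: "P3 > 0" using p3 by (simp add: P3_def)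
  have Q2p: "Q2 > 0" and Q3p: "Q3 > 0" and Q1p: "1 - Q2 - Q3 > 0"
    using q1 q2 q3 Q1 by (auto simp: Q2_def Q3_def)
  have a2p: "a2 > 0" unfolding a2_def using P3p P3lt by (simp add: power2_eq_square algebra_simps mult_pos_pos)
  have b2p: "b2 > 0" unfolding b2_def using Q3p Q1p Q2p by (simp add: power2_eq_square algebra_simps mult_pos_pos)
  have da: "a1^2 \<le> 4*a0*a2"
  proof -
    have "4*a0*a2 - a1^2 = 4*P2*P3*(1-P2-P3)" unfolding a0_def a1_def a2_def by (simp add: algebra_simps power2_eq_square)
    moreover have "4*P2*P3*(1-P2-P3) \<ge> 0" using P2n P3p P1n by simp
    ultimately show ?thesis by linarith
  qed
  have db: "b1^2 < 4*b0*b2"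
  proof -
    have "4*b0*b2 - b1^2 = 4*Q2*Q3*(1-Q2-Q3)" unfolding b0_def b1_def b2_def by (simp add: algebra_simps power2_eq_square)
    moreover have "4*Q2*Q3*(1-Q2-Q3) > 0" using Q2p Q3p Q1p by simp
    ultimately show ?thesis by linarith
  qed
  have "a0*b2 = b0*a2 \<and> a1*b2 = b1*a2"
    by (rule coeff_prop[OF key _ a2p b2p da db]) (use r in auto)
  then have "P2 = Q2 \<and> P3 = Q3"
    using prob_eq[OF Q2p Q3p _ P3p P3lt P2n] Q1p unfolding a0_def a1_def a2_def b0_def b1_def b2_def by auto
  then show ?thesis by (simp add: P2_def P3_def Q2_def Q3_def)
qed

lemma zero_one_const:
  fixes X :: "'a \<Rightarrow> real"
  assumes M: "prob_space M" and X[measurable]: "X \<in> borel_measurable M"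
    and h: "\<And>H. H \<in> sets borel \<Longrightarrow> measure (distr M borel X) H = 0 \<or> measure (distr M borel X) H = 1"
  shows "\<exists>c. AE \<omega> in M. X \<omega> = c"
proof -
  define P where "P = distr M borel X"
  interpret P: real_distribution P unfolding P_def
    using M X by (intro prob_space.real_distribution_distr) auto
  define F where "F = cdf P"
  have F01: "F b = 0 \<or> F b = 1" for b unfolding F_def cdf_def P_def using h[of "{..b}"] by auto
  have mono: "a \<le> b \<Longrightarrow> F a \<le> F b" for a b unfolding F_def by (rule P.cdf_nondecreasing)
  have "eventually (\<lambda>b. F b > 1/2) at_top"
    using P.cdf_lim_at_top_prob unfolding F_def by (rule order_tendstoD) simp
  then obtain b1 where b1: "F b1 > 1/2" by (auto simp: eventually_at_top_linorder)
  have "eventually (\<lambda>b. F b < 1/2) at_bot"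
    using P.cdf_lim_at_bot unfolding F_def by (rule order_tendstoD) simp
  then obtain b0 where b0: "F b0 < 1/2" by (auto simp: eventually_at_bot_linorder)
  define T where "T = {b. F b = 1}"
  have b1T: "b1 \<in> T" using b1 F01[of b1] by (auto simp: T_def)
  have lb: "b0 \<le> b" if "b \<in> T" for b
  proof (rule ccontr)
    assume "\<not> b0 \<le> b"
    then have "F b \<le> F b0" using mono by simp
    then show False using that b0 by (simp add: T_def)
  qed
  have bdd: "bdd_below T" using lb by (auto simp: bdd_below_def)
  define c where "c = Inf T"
  have up: "F (c + d) = 1" if "d > 0" for d
  proof -
    have "Inf T < c + d" using that by (simp add: c_def)
    then obtain b where "b \<in> T" "b < c + d" using cInf_less_iff[of T "c+d"] b1T bdd by auto
    then have "1 \<le> F (c+d)" using mono[of b "c+d"] by (simp add: T_def)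
    then show ?thesis using F01[of "c+d"] by auto
  qed
  have down: "F (c - d) = 0" if "d > 0" for d
  proof -
    have "c - d \<notin> T"
    proof
      assume "c - d \<in> T"
      then have "c \<le> c - d" unfolding c_def by (rule cInf_lower[OF _ bdd])
      then show False using that by simp
    qed
    then show ?thesis using F01[of "c-d"] by (auto simp: T_def)
  qed
  have ae1: "AE x in P. x \<le> c + inverse (real (Suc n))" for n
  proof -
    have "emeasure P {c + inverse (real (Suc n))<..} = 0"
    proof -
      have "measure P {c + inverse (real (Suc n))<..} = 1 - F (c + inverse (real (Suc n)))"
        using P.prob_compl[of "{..c + inverse (real (Suc n))}"] unfolding F_def cdf_def
        by (simp add: Compl_eq_Diff_UNIV[symmetric] Compl_atMost)
      then show ?thesis using up[of "inverse (real (Suc n))"] by (simp add: P.emeasure_eq_measure)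
    qed
    then show ?thesis by (subst AE_iff_measurable[OF _ refl]) (auto simp: not_le greaterThan_def)
  qed
  have ae2: "AE x in P. c - inverse (real (Suc n)) < x" for n
  proof -
    have "emeasure P {..c - inverse (real (Suc n))} = 0"
      using down[of "inverse (real (Suc n))"] unfolding F_def cdf_def by (simp add: P.emeasure_eq_measure)
    then show ?thesis by (subst AE_iff_measurable[OF _ refl]) (auto simp: not_less atMost_def)
  qed
  have "AE x in P. \<forall>n. x \<le> c + inverse (real (Suc n)) \<and> c - inverse (real (Suc n)) < x"
    unfolding AE_all_countable using ae1 ae2 by (auto intro: eventually_conj)
  then have "AE x in P. x = c"
  proof (rule AE_mp, intro AE_I2 impI)
    fix x assume H: "\<forall>n. x \<le> c + inverse (real (Suc n)) \<and> c - inverse (real (Suc n)) < x"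
    show "x = c"
    proof (rule ccontr)
      assume "x \<noteq> c"
      then have "\<bar>x - c\<bar> > 0" by simp
      then obtain n where n: "n > 0" "inverse (real n) < \<bar>x - c\<bar>" using ex_inverse_of_nat_less by blast
      have "inverse (real (Suc n)) \<le> inverse (real n)" using n by (simp add: le_imp_inverse_le)
      moreover have h1: "x \<le> c + inverse (real (Suc n))" and h2: "c - inverse (real (Suc n)) < x"
        using H by blast+
      then have "\<bar>x - c\<bar> \<le> inverse (real (Suc n))" unfolding abs_le_iff by linarith
      ultimately show False using n(2) by linarith
    qed
  qed
  then have "AE \<omega> in M. X \<omega> = c" unfolding P_def by (subst (asm) AE_distr_iff) auto
  then show ?thesis by blast
qed

definition part :: "real set \<Rightarrow> real set \<Rightarrow> real set \<Rightarrow> bool" where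
  "part A B C \<longleftrightarrow> A \<in> sets borel \<and> B \<in> sets borel \<and> C \<in> sets borel \<and>
     A \<inter> B = {} \<and> A \<inter> C = {} \<and> B \<inter> C = {} \<and> A \<union> B \<union> C = UNIV"

lemma part_perm: "part A B C \<Longrightarrow> part B C A" "part A B C \<Longrightarrow> part B A C"
  unfolding part_def by blast+

lemma part_compl: "part A B C \<Longrightarrow> A = -(B \<union> C)"
  unfolding part_def by blast

lemma part_sum:
  fixes X :: "'a \<Rightarrow> real"
  assumes M: "prob_space M" and X: "X \<in> borel_measurable M" and p: "part A B C"
  shows "measure (distr M borel X) A + measure (distr M borel X) B + measure (distr M borel X) C = 1"
  using distr_compl[OF M X, of B C] p part_compl[OF p] unfolding part_def by auto

lemma L:
  fixes X Y :: "'a \<Rightarrow> real"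
  assumes M: "prob_space M" and X: "X \<in> borel_measurable M" and Y: "Y \<in> borel_measurable M"
    and IC: "\<And>g. admissible M g X Y \<Longrightarrow> corr M (g \<circ> X) (g \<circ> Y) = r" and r: "r \<noteq> 0"
    and p: "part A B C"
    and qA: "measure (distr M borel Y) A > 0" and qB: "measure (distr M borel Y) B > 0"
    and qC: "measure (distr M borel Y) C > 0"
    and two: "(measure (distr M borel X) A > 0 \<and> measure (distr M borel X) B > 0)
      \<or> (measure (distr M borel X) A > 0 \<and> measure (distr M borel X) C > 0)
      \<or> (measure (distr M borel X) B > 0 \<and> measure (distr M borel X) C > 0)"
  shows "measure (distr M borel X) A = measure (distr M borel Y) A \<and>
         measure (distr M borel X) B = measure (distr M borel Y) B \<and>
         measure (distr M borel X) C = measure (distr M borel Y) C"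
proof -
  have sets: "B \<in> sets borel" "C \<in> sets borel" "B \<inter> C = {}" using p unfolding part_def by auto
  have Ae: "A = -(B \<union> C)" by (rule part_compl[OF p])
  have BC: "measure (distr M borel X) B = measure (distr M borel Y) B \<and>
         measure (distr M borel X) C = measure (distr M borel Y) C"
  proof (cases "measure (distr M borel X) C > 0")
    case True
    show ?thesis
      by (rule L0[OF M X Y IC r sets]) (use qA qB qC True two Ae in auto)
  next
    case False
    have s2: "C \<inter> B = {}" using sets by auto
    have e: "-(C \<union> B) = -(B \<union> C)" by auto
    have "measure (distr M borel X) C = measure (distr M borel Y) C \<and>
         measure (distr M borel X) B = measure (distr M borel Y) B"
      by (rule L0[OF M X Y IC r sets(2) sets(1) s2]) (use qA qB qC False two Ae e in auto)
    then show ?thesis by simp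
  qed
  moreover have "measure (distr M borel X) A = measure (distr M borel Y) A"
    using part_sum[OF M X p] part_sum[OF M Y p] BC by linarith
  ultimately show ?thesis by simp
qed

lemma absorb:
  fixes X Y :: "'a \<Rightarrow> real"
  assumes M: "prob_space M" and X[measurable]: "X \<in> borel_measurable M" and Y[measurable]: "Y \<in> borel_measurable M"
    and IC: "\<And>g. admissible M g X Y \<Longrightarrow> corr M (g \<circ> X) (g \<circ> Y) = r" and r: "r \<noteq> 0"
    and p: "part A B C"
    and qA: "measure (distr M borel Y) A > 0" and qB: "measure (distr M borel Y) B > 0"
    and qC: "measure (distr M borel Y) C > 0"
    and pB: "measure (distr M borel X) B > 0" and pC: "measure (distr M borel X) C > 0"
    and S: "S \<in> sets borel" "S \<subseteq> A"
  shows "measure (distr M borel X) S = measure (distr M borel Y) S"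
proof -
  interpret PX: prob_space "distr M borel X" using M X by (simp add: prob_space.prob_space_distr)
  interpret PY: prob_space "distr M borel Y" using M Y by (simp add: prob_space.prob_space_distr)
  have sets[measurable]: "A \<in> sets borel" "B \<in> sets borel" "C \<in> sets borel" using p unfolding part_def by auto
  have eqs: "measure (distr M borel X) A = measure (distr M borel Y) A \<and>
         measure (distr M borel X) B = measure (distr M borel Y) B \<and>
         measure (distr M borel X) C = measure (distr M borel Y) C"
    by (rule L[OF M X Y IC r p qA qB qC]) (use pB pC in auto)
  have main: "measure (distr M borel X) T = measure (distr M borel Y) T"
    if T: "T \<in> sets borel" "T \<subseteq> A" and pos: "measure (distr M borel Y) (A - T) > 0" for T
  proof -
    have p': "part (A - T) (B \<union> T) C" using p T unfolding part_def by auto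
    have BT: "B \<inter> T = {}" using p T unfolding part_def by auto
    have y2: "measure (distr M borel Y) (B \<union> T) > 0"
      using qB PY.finite_measure_mono[of B "B \<union> T"] T by auto
    have x2: "measure (distr M borel X) (B \<union> T) > 0"
      using pB PX.finite_measure_mono[of B "B \<union> T"] T by auto
    have "measure (distr M borel X) (B \<union> T) = measure (distr M borel Y) (B \<union> T)"
      using L[OF M X Y IC r p' pos y2 qC] x2 pC by auto
    moreover have "measure (distr M borel X) (B \<union> T) = measure (distr M borel X) B + measure (distr M borel X) T"
      using BT T by (intro PX.finite_measure_Union) auto
    moreover have "measure (distr M borel Y) (B \<union> T) = measure (distr M borel Y) B + measure (distr M borel Y) T"
      using BT T by (intro PY.finite_measure_Union) auto
    ultimately show ?thesis using eqs by linarith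
  qed
  show ?thesis
  proof (cases "measure (distr M borel Y) (A - S) > 0")
    case True
    then show ?thesis using main S by blast
  next
    case False
    then have z: "measure (distr M borel Y) (A - S) = 0" using measure_nonneg[of "distr M borel Y" "A - S"] by linarith
    have dY: "measure (distr M borel Y) (A - S) = measure (distr M borel Y) A - measure (distr M borel Y) S"
      using S by (intro PY.finite_measure_Diff) auto
    have dX: "measure (distr M borel X) (A - S) = measure (distr M borel X) A - measure (distr M borel X) S"
      using S by (intro PX.finite_measure_Diff) auto
    have e: "A - (A - S) = S" using S by auto
    have "measure (distr M borel X) (A - S) = measure (distr M borel Y) (A - S)"
      by (rule main) (use S qA z dY e in auto)
    then show ?thesis using dX dY eqs by linarith
  qed
qed

definition good :: "'a measure \<Rightarrow> ('a \<Rightarrow> real) \<Rightarrow> ('a \<Rightarrow> real) \<Rightarrow> real set \<Rightarrow> real set \<Rightarrow> real set \<Rightarrow> bool" where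
  "good M X Y A B C \<longleftrightarrow> part A B C \<and> measure (distr M borel Y) A > 0 \<and>
     measure (distr M borel Y) B > 0 \<and> measure (distr M borel Y) C > 0 \<and>
     ((measure (distr M borel X) A > 0 \<and> measure (distr M borel X) B > 0)
      \<or> (measure (distr M borel X) A > 0 \<and> measure (distr M borel X) C > 0)
      \<or> (measure (distr M borel X) B > 0 \<and> measure (distr M borel X) C > 0))"

lemma all_eq:
  fixes X Y :: "'a \<Rightarrow> real"
  assumes M: "prob_space M" and X[measurable]: "X \<in> borel_measurable M" and Y[measurable]: "Y \<in> borel_measurable M"
    and IC: "\<And>g. admissible M g X Y \<Longrightarrow> corr M (g \<circ> X) (g \<circ> Y) = r" and r: "r \<noteq> 0"
    and g: "good M X Y A B C"
    and S[measurable]: "S \<in> sets borel"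
  shows "measure (distr M borel X) S = measure (distr M borel Y) S"
proof -
  interpret PX: prob_space "distr M borel X" using M X by (simp add: prob_space.prob_space_distr)
  interpret PY: prob_space "distr M borel Y" using M Y by (simp add: prob_space.prob_space_distr)
  have p: "part A B C" and qA: "measure (distr M borel Y) A > 0" and qB: "measure (distr M borel Y) B > 0"
    and qC: "measure (distr M borel Y) C > 0" using g unfolding good_def by auto
  have sets[measurable]: "A \<in> sets borel" "B \<in> sets borel" "C \<in> sets borel" using p unfolding part_def by auto
  have eqs: "measure (distr M borel X) A = measure (distr M borel Y) A \<and>
         measure (distr M borel X) B = measure (distr M borel Y) B \<and>
         measure (distr M borel X) C = measure (distr M borel Y) C"
    by (rule L[OF M X Y IC r p qA qB qC]) (use g in \<open>auto simp: good_def\<close>)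
  then have pA: "measure (distr M borel X) A > 0" and pB: "measure (distr M borel X) B > 0"
    and pC: "measure (distr M borel X) C > 0" using qA qB qC by auto
  have p2: "part B C A" and p3: "part C A B" using part_perm(1)[OF p] part_perm(1)[OF part_perm(1)[OF p]] by auto
  have eA: "measure (distr M borel X) (S \<inter> A) = measure (distr M borel Y) (S \<inter> A)"
    by (rule absorb[OF M X Y IC r p qA qB qC pB pC]) auto
  have eB: "measure (distr M borel X) (S \<inter> B) = measure (distr M borel Y) (S \<inter> B)"
    by (rule absorb[OF M X Y IC r p2 qB qC qA pC pA]) auto
  have eC: "measure (distr M borel X) (S \<inter> C) = measure (distr M borel Y) (S \<inter> C)"
    by (rule absorb[OF M X Y IC r p3 qC qA qB pA pB]) auto
  have dec: "S = (S \<inter> A) \<union> (S \<inter> B) \<union> (S \<inter> C)" using p unfolding part_def by auto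
  have dis1: "((S \<inter> A) \<union> (S \<inter> B)) \<inter> (S \<inter> C) = {}" "(S \<inter> A) \<inter> (S \<inter> B) = {}"
    using p unfolding part_def by auto
  have "measure (distr M borel X) S = measure (distr M borel X) (S \<inter> A) + measure (distr M borel X) (S \<inter> B) + measure (distr M borel X) (S \<inter> C)"
    by (subst dec, subst PX.finite_measure_Union, use dis1 in auto, subst PX.finite_measure_Union, use dis1 in auto)
  moreover have "measure (distr M borel Y) S = measure (distr M borel Y) (S \<inter> A) + measure (distr M borel Y) (S \<inter> B) + measure (distr M borel Y) (S \<inter> C)"
    by (subst dec, subst PY.finite_measure_Union, use dis1 in auto, subst PY.finite_measure_Union, use dis1 in auto)
  ultimately show ?thesis using eA eB eC by simp
qed

lemma refine:
  fixes X Y :: "'a \<Rightarrow> real"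
  assumes M: "prob_space M" and X[measurable]: "X \<in> borel_measurable M" and Y[measurable]: "Y \<in> borel_measurable M"
    and p: "part A B C"
    and qA: "measure (distr M borel Y) A > 0" and qB: "measure (distr M borel Y) B > 0"
    and qC: "measure (distr M borel Y) C > 0"
    and pB: "measure (distr M borel X) B = 0" and pC: "measure (distr M borel X) C = 0"
    and H[measurable]: "H \<in> sets borel" and H0: "measure (distr M borel X) H > 0" and H1: "measure (distr M borel X) H < 1"
  shows "\<exists>A' B' C'. good M X Y A' B' C'"
proof -
  interpret PX: prob_space "distr M borel X" using M X by (simp add: prob_space.prob_space_distr)
  interpret PY: prob_space "distr M borel Y" using M Y by (simp add: prob_space.prob_space_distr)
  have sets[measurable]: "A \<in> sets borel" "B \<in> sets borel" "C \<in> sets borel" using p unfolding part_def by auto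
  have pA: "measure (distr M borel X) A = 1" using part_sum[OF M X p] pB pC by simp
  have "measure (distr M borel X) (H - A) \<le> measure (distr M borel X) (B \<union> C)"
    using p unfolding part_def by (intro PX.finite_measure_mono) auto
  also have "\<dots> \<le> measure (distr M borel X) B + measure (distr M borel X) C"
    using p unfolding part_def by (subst PX.finite_measure_Union) auto
  finally have HA: "measure (distr M borel X) (H - A) = 0" using pB pC measure_nonneg[of "distr M borel X" "H - A"] by linarith
  have "measure (distr M borel X) H = measure (distr M borel X) (A \<inter> H) + measure (distr M borel X) (H - A)"
    by (subst PX.finite_measure_Union[symmetric]) (auto intro: arg_cong[where f="measure _"])
  then have x1: "measure (distr M borel X) (A \<inter> H) > 0" using HA H0 by simp
  have "measure (distr M borel X) (A - H) = measure (distr M borel X) A - measure (distr M borel X) (A \<inter> H)"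
    using PX.finite_measure_Diff'[of A H] by (simp add: Int_commute)
  then have x2: "measure (distr M borel X) (A - H) > 0"
    using pA H1 \<open>measure (distr M borel X) H = _\<close> HA by simp
  have yA: "measure (distr M borel Y) A = measure (distr M borel Y) (A \<inter> H) + measure (distr M borel Y) (A - H)"
    by (subst PY.finite_measure_Union[symmetric]) (auto intro: arg_cong[where f="measure _"])
  show ?thesis
  proof (cases "measure (distr M borel Y) (A - H) > 0")
    case True
    have p': "part ((A \<inter> H) \<union> B) (A - H) C" using p unfolding part_def by auto
    have "measure (distr M borel Y) B \<le> measure (distr M borel Y) ((A \<inter> H) \<union> B)"
      by (intro PY.finite_measure_mono) auto
    moreover have "measure (distr M borel X) (A \<inter> H) \<le> measure (distr M borel X) ((A \<inter> H) \<union> B)"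
      by (intro PX.finite_measure_mono) auto
    ultimately have "good M X Y ((A \<inter> H) \<union> B) (A - H) C"
      unfolding good_def using p' True qB qC x1 x2 by auto
    then show ?thesis by blast
  next
    case False
    then have yH: "measure (distr M borel Y) (A \<inter> H) > 0" using yA qA measure_nonneg[of "distr M borel Y" "A - H"] by linarith
    have p': "part (A \<inter> H) ((A - H) \<union> B) C" using p unfolding part_def by auto
    have "measure (distr M borel Y) B \<le> measure (distr M borel Y) ((A - H) \<union> B)"
      by (intro PY.finite_measure_mono) auto
    moreover have "measure (distr M borel X) (A - H) \<le> measure (distr M borel X) ((A - H) \<union> B)"
      by (intro PX.finite_measure_mono) auto
    ultimately have "good M X Y (A \<inter> H) ((A - H) \<union> B) C"
      unfolding good_def using p' yH qB qC x1 x2 by auto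
    then show ?thesis by blast
  qed
qed

lemma good_exists:
  fixes X Y :: "'a \<Rightarrow> real"
  assumes M: "prob_space M" and X[measurable]: "X \<in> borel_measurable M" and Y[measurable]: "Y \<in> borel_measurable M"
    and p: "part A B C"
    and qA: "measure (distr M borel Y) A > 0" and qB: "measure (distr M borel Y) B > 0"
    and qC: "measure (distr M borel Y) C > 0"
    and H[measurable]: "H \<in> sets borel" and H0: "measure (distr M borel X) H > 0" and H1: "measure (distr M borel X) H < 1"
  shows "\<exists>A' B' C'. good M X Y A' B' C'"
proof -
  have s: "measure (distr M borel X) A + measure (distr M borel X) B + measure (distr M borel X) C = 1"
    by (rule part_sum[OF M X p])
  have n: "measure (distr M borel X) A \<ge> 0" "measure (distr M borel X) B \<ge> 0" "measure (distr M borel X) C \<ge> 0"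
    by auto
  show ?thesis
  proof (cases "good M X Y A B C")
    case True then show ?thesis by blast
  next
    case False
    then have nt: "\<not> ((measure (distr M borel X) A > 0 \<and> measure (distr M borel X) B > 0)
      \<or> (measure (distr M borel X) A > 0 \<and> measure (distr M borel X) C > 0)
      \<or> (measure (distr M borel X) B > 0 \<and> measure (distr M borel X) C > 0))"
      unfolding good_def using p qA qB qC by auto
    consider "measure (distr M borel X) B = 0 \<and> measure (distr M borel X) C = 0"
      | "measure (distr M borel X) C = 0 \<and> measure (distr M borel X) A = 0"
      | "measure (distr M borel X) A = 0 \<and> measure (distr M borel X) B = 0"
      using s n nt by linarith
    then show ?thesis
    proof cases
      case 1 then show ?thesis using refine[OF M X Y p qA qB qC _ _ H H0 H1] by blast
    next
      case 2 then show ?thesis using refine[OF M X Y part_perm(1)[OF p] qB qC qA _ _ H H0 H1] by blast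
    next
      case 3 then show ?thesis
        using refine[OF M X Y part_perm(1)[OF part_perm(1)[OF p]] qC qA qB _ _ H H0 H1] by blast
    qed
  qed
qed

lemma three_pts:
  fixes S :: "real set"
  assumes "infinite S \<or> card S > 2"
  shows "\<exists>a b c. a \<in> S \<and> b \<in> S \<and> c \<in> S \<and> a < b \<and> b < c"
proof -
  obtain T where T: "T \<subseteq> S" "card T = 3"
  proof (cases "finite S")
    case True
    then have "3 \<le> card S" using assms by auto
    then show ?thesis using obtain_subset_with_card_n that by metis
  next
    case False
    then show ?thesis using infinite_arbitrarily_large[of S 3] that by blast
  qed
  then obtain x y z where xyz: "T = {x,y,z}" "x \<noteq> y" "y \<noteq> z" "x \<noteq> z" by (auto simp: card_3_iff)
  have "\<exists>a b c. a \<in> {x,y,z} \<and> b \<in> {x,y,z} \<and> c \<in> {x,y,z} \<and> a < b \<and> b < c"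
    using xyz(2-4)
    by (cases x y rule: linorder_cases; cases y z rule: linorder_cases; cases x z rule: linorder_cases) blast+
  then show ?thesis using T xyz by blast
qed

lemma supp_pos:
  fixes Y :: "'a \<Rightarrow> real"
  assumes M: "prob_space M" and Y[measurable]: "Y \<in> borel_measurable M"
    and y: "y \<in> supp M Y" and e: "e > 0" and I: "I \<in> sets borel" "{y - e<..y + e} \<subseteq> I"
  shows "measure (distr M borel Y) I > 0"
proof -
  interpret PY: prob_space "distr M borel Y" using M Y by (simp add: prob_space.prob_space_distr)
  have "measure M {\<omega>\<in>space M. y - e < Y \<omega> \<and> Y \<omega> \<le> y + e} > 0" using y e unfolding supp_def by auto
  moreover have "{\<omega>\<in>space M. y - e < Y \<omega> \<and> Y \<omega> \<le> y + e} = Y -` {y - e<..y + e} \<inter> space M" by auto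
  ultimately have "measure (distr M borel Y) {y - e<..y + e} > 0" by (simp add: measure_distr)
  moreover have "measure (distr M borel Y) {y - e<..y + e} \<le> measure (distr M borel Y) I"
    using I by (intro PY.finite_measure_mono) auto
  ultimately show ?thesis by linarith
qed

theorem theorem2:
  fixes M :: "'a measure" and X Y :: "'a \<Rightarrow> real"
  assumes "prob_space M" and "atomless M"
    and "L2 M X" and "L2 M Y"
    and "distr M borel X \<noteq> distr M borel Y"
    and "infinite (supp M Y) \<or> card (supp M Y) > 2"
  shows "IC M X Y \<longleftrightarrow> IC_r M 0 X Y"
proof
  assume "IC_r M 0 X Y"
  then show "IC M X Y" unfolding IC_def by force
next
  note M = assms(1)
  have X[measurable]: "X \<in> borel_measurable M" and Y[measurable]: "Y \<in> borel_measurable M"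
    using assms(3,4) unfolding L2_def by auto
  interpret PX: prob_space "distr M borel X" using M X by (simp add: prob_space.prob_space_distr)
  interpret PY: prob_space "distr M borel Y" using M Y by (simp add: prob_space.prob_space_distr)
  assume "IC M X Y"
  then obtain r where ICr: "IC_r M r X Y" unfolding IC_def by auto
  show "IC_r M 0 X Y"
  proof (cases "r = 0")
    case True then show ?thesis using ICr by simp
  next
    case False
    have IC: "\<And>g. admissible M g X Y \<Longrightarrow> corr M (g \<circ> X) (g \<circ> Y) = r"
      using ICr unfolding IC_r_def by auto
    obtain y1 y2 y3 where y: "y1 \<in> supp M Y" "y2 \<in> supp M Y" "y3 \<in> supp M Y" "y1 < y2" "y2 < y3"
      using three_pts[OF assms(6)] by blast
    define c1 where "c1 = (y1 + y2)/2"
    define c2 where "c2 = (y2 + y3)/2"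
    have c: "y1 < c1" "c1 < y2" "y2 < c2" "c2 < y3" using y by (auto simp: c1_def c2_def)
    have p: "part {..c1} {c1<..c2} {c2<..}" unfolding part_def using c by auto
    have qA: "measure (distr M borel Y) {..c1} > 0"
      by (rule supp_pos[OF M Y y(1), of "c1 - y1"]) (use c in auto)
    have qB: "measure (distr M borel Y) {c1<..c2} > 0"
      by (rule supp_pos[OF M Y y(2), of "min (y2 - c1) (c2 - y2)"]) (use c in auto)
    have qC: "measure (distr M borel Y) {c2<..} > 0"
      by (rule supp_pos[OF M Y y(3), of "y3 - c2"]) (use c in auto)
    have nd: "\<not> (\<exists>c. AE \<omega> in M. X \<omega> = c)" using assms(3) unfolding L2_def by auto
    obtain H where H: "H \<in> sets borel" "\<not> (measure (distr M borel X) H = 0 \<or> measure (distr M borel X) H = 1)"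
      using zero_one_const[OF M X] nd by blast
    have H0: "measure (distr M borel X) H > 0" using H(2) measure_nonneg[of "distr M borel X" H] by linarith
    have H1: "measure (distr M borel X) H < 1" using H(2) PX.prob_le_1[of H] by linarith
    obtain A B C where g: "good M X Y A B C"
      using good_exists[OF M X Y p qA qB qC H(1) H0 H1] by blast
    have eq: "measure (distr M borel X) S = measure (distr M borel Y) S" if "S \<in> sets borel" for S
      by (rule all_eq[OF M X Y IC False g that])
    have "distr M borel X = distr M borel Y"
    proof (rule measure_eqI)
      show "sets (distr M borel X) = sets (distr M borel Y)" by simp
      fix S assume "S \<in> sets (distr M borel X)"
      then have "S \<in> sets borel" by simp
      then show "emeasure (distr M borel X) S = emeasure (distr M borel Y) S"
        using eq by (simp add: PX.emeasure_eq_measure PY.emeasure_eq_measure)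
    qed
    then show ?thesis using assms(5) by simp
  qed
qed

end
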